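(* Let $f:\mathbb{R}^n\to\mathbb{R}^n$ be a polynomial vector field (each component $f_j$ is a polynomial in $x=(x_1,\ldots,x_n)$ with real coefficients), and let $G$ be the weighted dependency graph of $f$. Suppose that for every cycle $c$ of $G$, the weight $\gamma_c$ is a constant function of $x$. Then $f$ is super-linearizable, i.e., the system $\dot x(t)=f(x(t))$ admits a super-linearization.
   Context: Weighted dependency graph: for a differentiable $f:\mathbb{R}^n\to\mathbb{R}^n$, $G$ is the directed graph (self-loops allowed) on nodes $v_1,\ldots,v_n$ where, with $\gamma_{ij}(x):=\frac{\partial f_j(x)}{\partial x_i}$ for $1\le i,j\le n$, there is a directed edge $v_iv_j$ (from $v_i$ to $v_j$; a self-loop if $i=j$) precisely when $\gamma_{ij}$ is not identically zero, and this edge has weight $\gamma_{ij}$. A cycle is a closed walk $c=v_{i_1}v_{i_2}\cdots v_{i_k}v_{i_1}$ ($k\ge 1$, with $v_{i_1},\ldots,v_{i_k}$ distinct and consecutive nodes joined by edges of $G$; a self-loop is a cycle with $k=1$). For a walk $w=v_{j_1}v_{j_2}\cdots v_{j_r}$, its weight is $\gamma_w:=\prod_{s=1}^{r-1}\gamma_{j_sj_{s+1}}$. Super-linearization: let $\Pi:\mathbb{R}^{n+m}\to\mathbb{R}^n$ be the projection $\Pi(z)=(z_1,\ldots,z_n)$. A vector field $f:\mathbb{R}^n\to\mathbb{R}^n$ is super-linearizable if there exist an integer $m\ge 0$, a matrix $A\in\mathbb{R}^{(n+m)\times(n+m)}$, a vector $D\in\mathbb{R}^{n+m}$ and an injective map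 $p:\mathbb{R}^n\to\mathbb{R}^m$ (the observables) such that for all $x_0\in\mathbb{R}^n$ and all $t$, $\Pi\big(e^{t(Az+D)}z_0\big)=e^{tf}x_0$ where $z_0=(x_0,p(x_0))$. Here $e^{tg}y_0$ denotes the solution at time $t$ of $\dot y=g(y)$ with initial state $y_0$. *)

theory Defs
  imports "HOL-Analysis.Analysis"
begin

text \<open>Points of R^n are represented as functions nat => real; only the
coordinates 0..n-1 matter. The carrier of R^n is the set of such functions
vanishing at indices >= n.\<close>

definition Rn :: "nat \<Rightarrow> (nat \<Rightarrow> real) set" where
  "Rn n = {x. \<forall>i\<ge>n. x i = 0}"

inductive poly_fun :: "nat \<Rightarrow> ((nat \<Rightarrow> real) \<Rightarrow> real) \<Rightarrow> bool" for n where
  const: "poly_fun n (\<lambda>x. c)"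
| var: "i < n \<Longrightarrow> poly_fun n (\<lambda>x. x i)"
| add: "poly_fun n p \<Longrightarrow> poly_fun n q \<Longrightarrow> poly_fun n (\<lambda>x. p x + q x)"
| mult: "poly_fun n p \<Longrightarrow> poly_fun n q \<Longrightarrow> poly_fun n (\<lambda>x. p x * q x)"

definition poly_vector_field :: "nat \<Rightarrow> ((nat \<Rightarrow> real) \<Rightarrow> (nat \<Rightarrow> real)) \<Rightarrow> bool" where
  "poly_vector_field n f \<longleftrightarrow> (\<forall>j<n. poly_fun n (\<lambda>x. f x j))"

definition gamma :: "((nat \<Rightarrow> real) \<Rightarrow> (nat \<Rightarrow> real)) \<Rightarrow> nat \<Rightarrow> nat \<Rightarrow> (nat \<Rightarrow> real) \<Rightarrow> real" where
  "gamma f i j x = deriv (\<lambda>s. f (x(i := s)) j) (x i)"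

definition dep_edge :: "nat \<Rightarrow> ((nat \<Rightarrow> real) \<Rightarrow> (nat \<Rightarrow> real)) \<Rightarrow> nat \<Rightarrow> nat \<Rightarrow> bool" where
  "dep_edge n f i j \<longleftrightarrow> i < n \<and> j < n \<and> (\<exists>x\<in>Rn n. gamma f i j x \<noteq> 0)"

definition dep_cycle :: "nat \<Rightarrow> ((nat \<Rightarrow> real) \<Rightarrow> (nat \<Rightarrow> real)) \<Rightarrow> nat list \<Rightarrow> bool" where
  "dep_cycle n f c \<longleftrightarrow> c \<noteq> [] \<and> distinct c \<and>
     (\<forall>s<length c. dep_edge n f (c ! s) (c ! ((s + 1) mod length c)))"

definition cycle_weight :: "((nat \<Rightarrow> real) \<Rightarrow> (nat \<Rightarrow> real)) \<Rightarrow> nat list \<Rightarrow> (nat \<Rightarrow> real) \<Rightarrow> real" where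
  "cycle_weight f c x = (\<Prod>s<length c. gamma f (c ! s) (c ! ((s + 1) mod length c)) x)"

definition is_solution :: "nat \<Rightarrow> ((nat \<Rightarrow> real) \<Rightarrow> (nat \<Rightarrow> real)) \<Rightarrow> real set \<Rightarrow>
    (nat \<Rightarrow> real) \<Rightarrow> (real \<Rightarrow> nat \<Rightarrow> real) \<Rightarrow> bool" where
  "is_solution n f T x0 x \<longleftrightarrow> 0 \<in> T \<and> (\<forall>t\<in>T. x t \<in> Rn n) \<and> (\<forall>i<n. x 0 i = x0 i) \<and>
     (\<forall>t\<in>T. \<forall>i<n. ((\<lambda>s. x s i) has_real_derivative f (x t) i) (at t))"

text \<open>Super-linearizability: there are m, A in R^((n+m)x(n+m)), D in R^(n+m) and an
injective p : R^n -> R^m such that for every x0 in R^n, the solution z of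
zdot = A z + D with z(0) = (x0, p x0) (global, since the system is affine) projects
onto the solution of xdot = f(x) from x0, at every time t where the latter is defined
(i.e. on every open interval around 0 on which a solution exists).\<close>

definition super_linearizable :: "nat \<Rightarrow> ((nat \<Rightarrow> real) \<Rightarrow> (nat \<Rightarrow> real)) \<Rightarrow> bool" where
  "super_linearizable n f \<longleftrightarrow>
    (\<exists>(m::nat) (A::nat \<Rightarrow> nat \<Rightarrow> real) (D::nat \<Rightarrow> real) (p::(nat \<Rightarrow> real) \<Rightarrow> (nat \<Rightarrow> real)).
       (\<forall>x\<in>Rn n. \<forall>y\<in>Rn n. (\<forall>k<m. p x k = p y k) \<longrightarrow> x = y) \<and>
       (\<forall>x0\<in>Rn n. \<forall>z::real \<Rightarrow> nat \<Rightarrow> real.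
          ((\<forall>k<n. z 0 k = x0 k) \<and> (\<forall>k<m. z 0 (n + k) = p x0 k) \<and>
           (\<forall>t. \<forall>k<n+m. ((\<lambda>s. z s k) has_real_derivative
                 ((\<Sum>l<n+m. A k l * z t l) + D k)) (at t)))
          \<longrightarrow> (\<forall>a b x. a < 0 \<and> 0 < b \<and> is_solution n f {a<..<b} x0 x
                 \<longrightarrow> (\<forall>t\<in>{a<..<b}. \<forall>i<n. z t i = x t i))))"

end

theory Submission
  imports Defs "HOL-Computational_Algebra.Polynomial" "HOL-Library.Transitive_Closure_Table"
begin

lemma pf_line:
  assumes "poly_fun n p"
  shows "\<exists>P. \<forall>s. p (\<lambda>k. x k + s * v k) = poly P s"
  using assms
proof induction
  case (const c) show ?case by (intro exI[of _ "[:c:]"]) simp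
next
  case (var i) show ?case by (intro exI[of _ "[:x i, v i:]"]) simp
next
  case (add p q)
  then obtain P Q where "\<forall>s. p (\<lambda>k. x k + s * v k) = poly P s" "\<forall>s. q (\<lambda>k. x k + s * v k) = poly Q s" by blast
  then show ?case by (intro exI[of _ "P+Q"]) simp
next
  case (mult p q)
  then obtain P Q where "\<forall>s. p (\<lambda>k. x k + s * v k) = poly P s" "\<forall>s. q (\<lambda>k. x k + s * v k) = poly Q s" by blast
  then show ?case by (intro exI[of _ "P*Q"]) simp
qed

lemma pf_deriv:
  assumes "poly_fun n p"
  shows "\<exists>q. poly_fun n q \<and> (\<forall>x s. ((\<lambda>s. p (x(i:=s))) has_real_derivative q (x(i:=s))) (at s))"
  using assms
proof induction
  case (const c) then show ?case by (intro exI[of _ "\<lambda>x. 0"]) (auto intro: poly_fun.const)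
next
  case (var k)
  show ?case
  proof (cases "k = i")
    case True
    then show ?thesis by (intro exI[of _ "\<lambda>x. 1"]) (auto intro: poly_fun.const derivative_eq_intros)
  next
    case False
    then show ?thesis by (intro exI[of _ "\<lambda>x. 0"]) (auto intro: poly_fun.const)
  qed
next
  case (add p q)
  then obtain dp dq where "poly_fun n dp" "poly_fun n dq"
    and d: "\<forall>x s. ((\<lambda>s. p (x(i:=s))) has_real_derivative dp (x(i:=s))) (at s)"
    "\<forall>x s. ((\<lambda>s. q (x(i:=s))) has_real_derivative dq (x(i:=s))) (at s)" by blast
  show ?case
  proof (intro exI conjI allI)
    show "poly_fun n (\<lambda>x. dp x + dq x)" using \<open>poly_fun n dp\<close> \<open>poly_fun n dq\<close> by (rule poly_fun.add)
    fix x s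
    show "((\<lambda>s. p (x(i:=s)) + q (x(i:=s))) has_real_derivative dp (x(i:=s)) + dq (x(i:=s))) (at s)"
      by (rule DERIV_add) (use d in blast)+
  qed
next
  case (mult p q)
  then obtain dp dq where "poly_fun n dp" "poly_fun n dq"
    and d: "\<forall>x s. ((\<lambda>s. p (x(i:=s))) has_real_derivative dp (x(i:=s))) (at s)"
    "\<forall>x s. ((\<lambda>s. q (x(i:=s))) has_real_derivative dq (x(i:=s))) (at s)" by blast
  show ?case
  proof (intro exI conjI allI)
    show "poly_fun n (\<lambda>x. dp x * q x + p x * dq x)" using \<open>poly_fun n dp\<close> \<open>poly_fun n dq\<close> mult.hyps
      by (intro poly_fun.add poly_fun.mult)
    fix x s
    show "((\<lambda>s. p (x(i:=s)) * q (x(i:=s))) has_real_derivative dp (x(i:=s)) * q (x(i:=s)) + p (x(i:=s)) * dq (x(i:=s))) (at s)"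
      using DERIV_mult[where f="\<lambda>s. p (x(i:=s))" and Da="dp (x(i:=s))" and x=s and g="\<lambda>s. q (x(i:=s))" and Db="dq (x(i:=s))"] d
      by (simp add: algebra_simps)
  qed
qed

lemma gamma_pf:
  assumes "poly_fun n (\<lambda>x. f x j)"
  shows "\<exists>q. poly_fun n q \<and> gamma f i j = q \<and> (\<forall>x s. ((\<lambda>s. f (x(i:=s)) j) has_real_derivative q (x(i:=s))) (at s))"
proof -
  obtain q where q: "poly_fun n q" "\<forall>x s. ((\<lambda>s. f (x(i:=s)) j) has_real_derivative q (x(i:=s))) (at s)"
    using pf_deriv[OF assms, of i] by auto
  have "gamma f i j x = q x" for x
    unfolding gamma_def using DERIV_imp_deriv[OF q(2)[rule_format, of x "x i"]] by simp
  hence "gamma f i j = q" by (rule ext)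
  then show ?thesis using q by blast
qed

lemma Rn_line: "x \<in> Rn n \<Longrightarrow> v \<in> Rn n \<Longrightarrow> (\<lambda>k. x k + s * v k) \<in> Rn n"
  by (simp add: Rn_def)

lemma pf_nz2:
  assumes "poly_fun n p" "poly_fun n q" "a \<in> Rn n" "b \<in> Rn n" "p a \<noteq> 0" "q b \<noteq> 0"
  shows "\<exists>x\<in>Rn n. p x * q x \<noteq> 0"
proof -
  define v where "v = (\<lambda>k. b k - a k)"
  have v: "v \<in> Rn n" using assms(3,4) by (simp add: Rn_def v_def)
  obtain P where P: "\<forall>s. p (\<lambda>k. a k + s * v k) = poly P s" using pf_line[OF assms(1)] by blast
  obtain Q where Q: "\<forall>s. q (\<lambda>k. a k + s * v k) = poly Q s" using pf_line[OF assms(2)] by blast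
  have "poly P 0 \<noteq> 0" using P[rule_format, of 0] assms(5) by simp
  hence "P \<noteq> 0" by auto
  have "(\<lambda>k. a k + 1 * v k) = b" by (simp add: v_def)
  hence "poly Q 1 \<noteq> 0" using Q[rule_format, of 1] assms(6) by simp
  hence "Q \<noteq> 0" by auto
  with \<open>P \<noteq> 0\<close> have "P * Q \<noteq> 0" by simp
  then obtain s where "poly (P*Q) s \<noteq> 0" using poly_all_0_iff_0 by blast
  then show ?thesis using P Q Rn_line[OF assms(3) v, of s] by (intro bexI[of _ "(\<lambda>k. a k + s * v k)"]) auto
qed

lemma pf_prod:
  assumes "finite I" "\<forall>s\<in>I. poly_fun n (g s)"
  shows "poly_fun n (\<lambda>x. \<Prod>s\<in>I. g s x)"
  using assms by (induction I rule: finite_induct) (auto intro: poly_fun.const poly_fun.mult)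

lemma pf_prod_nz:
  assumes "finite I" "\<forall>s\<in>I. poly_fun n (g s) \<and> (\<exists>x\<in>Rn n. g s x \<noteq> 0)"
  shows "\<exists>x\<in>Rn n. (\<Prod>s\<in>I. g s x) \<noteq> 0"
  using assms
proof (induction I rule: finite_induct)
  case empty then show ?case by (intro bexI[of _ "\<lambda>_. 0"]) (auto simp: Rn_def)
next
  case (insert s0 I)
  then obtain a b where ab: "a \<in> Rn n" "b \<in> Rn n" "g s0 a \<noteq> 0" "(\<Prod>s\<in>I. g s b) \<noteq> 0" by auto
  have "\<exists>x\<in>Rn n. g s0 x * (\<Prod>s\<in>I. g s x) \<noteq> 0"
    by (rule pf_nz2[of n "g s0" "\<lambda>x. \<Prod>s\<in>I. g s x", OF _ pf_prod ab(1,2,3)]) (use insert ab in auto)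
  then show ?case using insert by auto
qed

lemma pf_unit_const:
  assumes "poly_fun n p" "poly_fun n q" "\<forall>x\<in>Rn n. p x * q x = w" "w \<noteq> 0" "a \<in> Rn n" "b \<in> Rn n"
  shows "p a = p b"
proof -
  define v where "v = (\<lambda>k. b k - a k)"
  have v: "v \<in> Rn n" using assms by (simp add: Rn_def v_def)
  obtain P where P: "\<forall>s. p (\<lambda>k. a k + s * v k) = poly P s" using pf_line[OF assms(1)] by blast
  obtain Q where Q: "\<forall>s. q (\<lambda>k. a k + s * v k) = poly Q s" using pf_line[OF assms(2)] by blast
  have "poly (P*Q) s = poly [:w:] s" for s
  proof -
    have "p (\<lambda>k. a k + s * v k) * q (\<lambda>k. a k + s * v k) = w" using assms(3) Rn_line[OF assms(5) v] by blast
    then show ?thesis using P Q by simp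
  qed
  hence "poly (P*Q) = poly [:w:]" by (rule ext)
  hence PQ: "P * Q = [:w:]" by (simp add: poly_eq_poly_eq_iff)
  hence "P \<noteq> 0" "Q \<noteq> 0" using assms(4) by auto
  hence "degree P = 0" using PQ degree_mult_eq[of P Q] by simp
  then obtain c where "P = [:c:]" by (meson degree_eq_zeroE)
  hence "poly P 0 = poly P 1" by simp
  moreover have "(\<lambda>k. a k + 1 * v k) = b" "(\<lambda>k. a k + 0 * v k) = a" by (auto simp: v_def)
  ultimately show ?thesis using P by metis
qed

lemma prod_factor_const:
  assumes "finite I" "s0 \<in> I" "\<forall>s\<in>I. poly_fun n (g s) \<and> (\<exists>x\<in>Rn n. g s x \<noteq> 0)"
    "\<forall>x\<in>Rn n. (\<Prod>s\<in>I. g s x) = w" "a \<in> Rn n" "b \<in> Rn n"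
  shows "g s0 a = g s0 b"
proof -
  obtain x where "x \<in> Rn n" "(\<Prod>s\<in>I. g s x) \<noteq> 0" using pf_prod_nz[OF assms(1,3)] by blast
  hence w: "w \<noteq> 0" using assms(4) by auto
  have "\<forall>x\<in>Rn n. g s0 x * (\<Prod>s\<in>I-{s0}. g s x) = w"
    using assms(4) prod.remove[OF assms(1,2)] by metis
  moreover have "poly_fun n (\<lambda>x. \<Prod>s\<in>I-{s0}. g s x)" using assms(1,3) by (intro pf_prod) auto
  ultimately show ?thesis using pf_unit_const[OF _ _ _ w assms(5,6)] assms(2,3) by blast
qed

lemma path_edges:
  assumes "rtrancl_path r x ys y"
  shows "(\<forall>s<length ys. r ((x#ys)!s) ((x#ys)!(s+1))) \<and> last (x#ys) = y"
  using assms
proof induction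
  case (base x) then show ?case by simp
next
  case (step x y ys z)
  have "r ((x # y # ys) ! s) ((x # y # ys) ! (s + 1))" if "s < length (y#ys)" for s
  proof (cases s)
    case 0 then show ?thesis using step by simp
  next
    case (Suc s') then show ?thesis using step that by simp
  qed
  then show ?case using step by simp
qed

lemma edge_const:
  assumes pvf: "poly_vector_field n f"
    and cyc: "\<forall>c. dep_cycle n f c \<longrightarrow> (\<exists>w. \<forall>x\<in>Rn n. cycle_weight f c x = w)"
    and e: "dep_edge n f i j" and bk: "(dep_edge n f)\<^sup>*\<^sup>* j i"
    and x: "x \<in> Rn n" and y: "y \<in> Rn n"
  shows "gamma f i j x = gamma f i j y"
proof -
  obtain xs0 where "rtrancl_path (dep_edge n f) j xs0 i" using bk rtranclp_eq_rtrancl_path by metis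
  then obtain xs where p: "rtrancl_path (dep_edge n f) j xs i" and dist: "distinct (j # xs)"
    using rtrancl_path_distinct by metis
  define c where "c = j # xs"
  define k where "k = length c"
  have k: "k = Suc (length xs)" by (simp add: k_def c_def)
  have pe: "\<forall>s<length xs. dep_edge n f (c!s) (c!(s+1))" and lst: "last c = i"
    using path_edges[OF p] by (auto simp: c_def)
  have ck: "c ! (k - 1) = i" using lst unfolding k c_def by (cases xs) (auto simp: last_conv_nth)
  have edges: "\<forall>s<k. dep_edge n f (c!s) (c!((s+1) mod k))"
  proof (intro allI impI)
    fix s assume "s < k"
    show "dep_edge n f (c!s) (c!((s+1) mod k))"
    proof (cases "s = k - 1")
      case True
      then have "(s+1) mod k = 0" using k by simp
      then have "c ! ((s+1) mod k) = j" by (simp add: c_def)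
      then show ?thesis using True ck e by simp
    next
      case False
      then have "s < length xs" "(s+1) mod k = s + 1" using \<open>s<k\<close> k by auto
      then show ?thesis using pe by simp
    qed
  qed
  have "c \<noteq> []" "distinct c" using dist by (auto simp: c_def)
  then have "dep_cycle n f c" unfolding dep_cycle_def using edges by (simp add: k_def)
  then obtain w where w: "\<forall>x\<in>Rn n. cycle_weight f c x = w" using cyc by blast
  define g where "g s = gamma f (c!s) (c!((s+1) mod k))" for s
  have "\<forall>s\<in>{..<k}. poly_fun n (g s) \<and> (\<exists>x\<in>Rn n. g s x \<noteq> 0)"
  proof
    fix s assume "s \<in> {..<k}"
    then have de: "dep_edge n f (c!s) (c!((s+1) mod k))" using edges by auto
    then have "poly_fun n (\<lambda>x. f x (c!((s+1) mod k)))" using pvf by (simp add: poly_vector_field_def dep_edge_def)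
    then have "poly_fun n (g s)" unfolding g_def using gamma_pf by metis
    then show "poly_fun n (g s) \<and> (\<exists>x\<in>Rn n. g s x \<noteq> 0)" using de by (simp add: dep_edge_def g_def)
  qed
  moreover have "\<forall>x\<in>Rn n. (\<Prod>s\<in>{..<k}. g s x) = w" using w by (simp add: cycle_weight_def g_def k_def)
  ultimately have "g (k-1) x = g (k-1) y"
    using prod_factor_const[of "{..<k}" "k-1" n g w x y] x y k by simp
  moreover have "(k - 1 + 1) mod k = 0" using k by simp
  ultimately have "gamma f (c ! (k - 1)) (c ! 0) x = gamma f (c ! (k - 1)) (c ! 0) y" by (simp add: g_def)
  then show ?thesis using ck by (simp add: c_def)
qed

definition restr :: "nat set \<Rightarrow> (nat \<Rightarrow> real) \<Rightarrow> nat \<Rightarrow> real" where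
  "restr U x = (\<lambda>k. if k \<in> U then x k else 0)"

definition upst :: "nat \<Rightarrow> ((nat \<Rightarrow> real) \<Rightarrow> (nat \<Rightarrow> real)) \<Rightarrow> nat \<Rightarrow> nat set" where
  "upst n f j = {i. (dep_edge n f)\<^sup>*\<^sup>* i j \<and> \<not> (dep_edge n f)\<^sup>*\<^sup>* j i}"

lemma zero_partial:
  assumes "finite F" "F \<subseteq> {..<n}"
    "\<forall>i\<in>F. \<forall>y\<in>Rn n. \<forall>s. ((\<lambda>s. h (y(i:=s))) has_real_derivative 0) (at s)"
  shows "\<forall>x\<in>Rn n. h x = h (\<lambda>k. if k \<in> F then 0 else x k)"
  using assms
proof (induction F rule: finite_induct)
  case empty then show ?case by simp
next
  case (insert i F)
  show ?case
  proof
    fix x assume x: "x \<in> Rn n"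
    define y where "y = (\<lambda>k. if k \<in> F then 0 else x k)"
    have y: "y \<in> Rn n" using x by (auto simp: Rn_def y_def)
    have "h x = h y" using insert x by (simp add: y_def)
    also have "h y = h (y(i := y i))" by simp
    also have "\<dots> = h (y(i := 0))"
      using DERIV_isconst_all[of "\<lambda>s. h (y(i:=s))" "y i" 0] insert(5) y by blast
    also have "y(i := 0) = (\<lambda>k. if k \<in> insert i F then 0 else x k)" by (auto simp: y_def)
    finally show "h x = h (\<lambda>k. if k \<in> insert i F then 0 else x k)" .
  qed
qed

lemma gamma_const_off_upst:
  assumes pvf: "poly_vector_field n f"
    and cyc: "\<forall>c. dep_cycle n f c \<longrightarrow> (\<exists>w. \<forall>x\<in>Rn n. cycle_weight f c x = w)"
    and "i < n" "j < n" "i \<notin> upst n f j" "x \<in> Rn n" "y \<in> Rn n"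
  shows "gamma f i j x = gamma f i j y"
proof (cases "dep_edge n f i j")
  case True
  then have "(dep_edge n f)\<^sup>*\<^sup>* j i" using assms(5) by (auto simp: upst_def)
  then show ?thesis using edge_const[OF pvf cyc True _ assms(6,7)] by blast
next
  case False
  then show ?thesis using assms by (auto simp: dep_edge_def)
qed

lemma decomp:
  assumes pvf: "poly_vector_field n f"
    and cyc: "\<forall>c. dep_cycle n f c \<longrightarrow> (\<exists>w. \<forall>x\<in>Rn n. cycle_weight f c x = w)"
    and j: "j < n"
  shows "\<forall>x\<in>Rn n. f x j = (\<Sum>i\<in>{i. i < n \<and> i \<notin> upst n f j}. gamma f i j (\<lambda>_. 0) * x i)
             + f (restr (upst n f j) x) j"
proof -
  define L where "L = {i. i < n \<and> i \<notin> upst n f j}"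
  define a where "a i = gamma f i j (\<lambda>_. 0)" for i
  define h where "h x = f x j - (\<Sum>i\<in>L. a i * x i)" for x
  have finL: "finite L" "L \<subseteq> {..<n}" by (auto simp: L_def)
  have z0: "(\<lambda>_. 0) \<in> Rn n" by (simp add: Rn_def)
  have pj: "poly_fun n (\<lambda>x. f x j)" using pvf j by (simp add: poly_vector_field_def)
  have "\<forall>i\<in>L. \<forall>y\<in>Rn n. \<forall>s. ((\<lambda>s. h (y(i:=s))) has_real_derivative 0) (at s)"
  proof (intro ballI allI)
    fix i y s assume i: "i \<in> L" and y: "y \<in> Rn n"
    obtain q where q: "gamma f i j = q" "\<forall>x s. ((\<lambda>s. f (x(i:=s)) j) has_real_derivative q (x(i:=s))) (at s)"
      using gamma_pf[of n f j i] pj by blast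
    have yi: "y(i:=s) \<in> Rn n" using y i by (auto simp: Rn_def L_def)
    have "q (y(i:=s)) = a i"
      using gamma_const_off_upst[OF pvf cyc _ j _ yi z0, of i] i q(1) by (simp add: L_def a_def)
    then have d1: "((\<lambda>s. f (y(i:=s)) j) has_real_derivative a i) (at s)" using q(2) by metis
    have sp: "(\<Sum>k\<in>L. a k * (y(i:=s)) k) = a i * s + (\<Sum>k\<in>L-{i}. a k * y k)" for s
      using sum.remove[OF finL(1) i, of "\<lambda>k. a k * (y(i:=s)) k"] by simp
    have d2: "((\<lambda>s. \<Sum>k\<in>L. a k * (y(i:=s)) k) has_real_derivative a i) (at s)"
      unfolding sp by (auto intro!: derivative_eq_intros)
    show "((\<lambda>s. h (y(i:=s))) has_real_derivative 0) (at s)"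
      unfolding h_def using DERIV_diff[OF d1 d2] by simp
  qed
  from zero_partial[OF finL this]
  have hz: "\<forall>x\<in>Rn n. h x = h (\<lambda>k. if k \<in> L then 0 else x k)" .
  show ?thesis
  proof
    fix x assume x: "x \<in> Rn n"
    have e: "(\<lambda>k. if k \<in> L then 0 else x k) = restr (upst n f j) x"
      using x by (auto simp: restr_def L_def Rn_def)
    have "(\<Sum>i\<in>L. a i * restr (upst n f j) x i) = 0" by (auto simp: L_def restr_def)
    then have hr: "h (restr (upst n f j) x) = f (restr (upst n f j) x) j" by (simp add: h_def)
    then show "f x j = (\<Sum>i\<in>{i. i < n \<and> i \<notin> upst n f j}. gamma f i j (\<lambda>_. 0) * x i) + f (restr (upst n f j) x) j"
    proof -
      have "h x = h (restr (upst n f j) x)" using hz x e by simp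
      then have "f x j - (\<Sum>i\<in>L. a i * x i) = f (restr (upst n f j) x) j"
        using hr by (simp add: h_def)
      then show ?thesis by (simp add: L_def a_def)
    qed
  qed
qed

inductive wpf :: "nat \<Rightarrow> (nat \<Rightarrow> nat) \<Rightarrow> nat \<Rightarrow> ((nat \<Rightarrow> real) \<Rightarrow> real) \<Rightarrow> bool" for n \<omega> where
  wc: "wpf n \<omega> d (\<lambda>x. c)"
| wv: "i < n \<Longrightarrow> \<omega> i \<le> d \<Longrightarrow> wpf n \<omega> d (\<lambda>x. x i)"
| wa: "wpf n \<omega> d p \<Longrightarrow> wpf n \<omega> d q \<Longrightarrow> wpf n \<omega> d (\<lambda>x. p x + q x)"
| wm: "wpf n \<omega> d1 p \<Longrightarrow> wpf n \<omega> d2 q \<Longrightarrow> wpf n \<omega> (d1 + d2) (\<lambda>x. p x * q x)"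
| wmono: "wpf n \<omega> d p \<Longrightarrow> d \<le> d' \<Longrightarrow> wpf n \<omega> d' p"

lemma wpf_sum:
  assumes "finite I" "\<forall>i\<in>I. wpf n \<omega> d (q i)"
  shows "wpf n \<omega> d (\<lambda>x. \<Sum>i\<in>I. q i x)"
  using assms by (induction I rule: finite_induct) (auto intro: wc wa)

lemma pf_wdeg:
  assumes "poly_fun n p"
  shows "\<exists>d. \<forall>\<omega> U M. (\<forall>i\<in>U. i < n \<longrightarrow> \<omega> i \<le> M) \<longrightarrow> wpf n \<omega> (d*M) (\<lambda>x. p (restr U x))"
  using assms
proof induction
  case (const c) show ?case by (auto intro: wc)
next
  case (var i)
  show ?case
  proof (intro exI[of _ 1] allI impI)
    fix \<omega> :: "nat \<Rightarrow> nat" and U and M :: nat assume h: "\<forall>i\<in>U. i < n \<longrightarrow> \<omega> i \<le> M"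
    show "wpf n \<omega> (1 * M) (\<lambda>x. restr U x i)"
    proof (cases "i \<in> U")
      case True
      then have "(\<lambda>x. restr U x i) = (\<lambda>x. x i)" by (auto simp: restr_def)
      then show ?thesis using h True var by (auto intro: wv)
    next
      case False
      then have "(\<lambda>x. restr U x i) = (\<lambda>x. 0)" by (auto simp: restr_def)
      then show ?thesis by (auto intro: wc)
    qed
  qed
next
  case (add p q)
  then obtain d1 d2 where d: "\<forall>\<omega> U M. (\<forall>i\<in>U. i < n \<longrightarrow> \<omega> i \<le> M) \<longrightarrow> wpf n \<omega> (d1*M) (\<lambda>x. p (restr U x))"
    "\<forall>\<omega> U M. (\<forall>i\<in>U. i < n \<longrightarrow> \<omega> i \<le> M) \<longrightarrow> wpf n \<omega> (d2*M) (\<lambda>x. q (restr U x))" by blast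
  show ?case
  proof (intro exI[of _ "max d1 d2"] allI impI)
    fix \<omega> :: "nat \<Rightarrow> nat" and U and M :: nat assume h: "\<forall>i\<in>U. i < n \<longrightarrow> \<omega> i \<le> M"
    have "wpf n \<omega> (max d1 d2 * M) (\<lambda>x. p (restr U x))"
      using d(1) h by (meson wmono max.cobounded1 mult_le_mono1)
    moreover have "wpf n \<omega> (max d1 d2 * M) (\<lambda>x. q (restr U x))"
      using d(2) h by (meson wmono max.cobounded2 mult_le_mono1)
    ultimately show "wpf n \<omega> (max d1 d2 * M) (\<lambda>x. p (restr U x) + q (restr U x))" by (rule wa)
  qed
next
  case (mult p q)
  then obtain d1 d2 where d: "\<forall>\<omega> U M. (\<forall>i\<in>U. i < n \<longrightarrow> \<omega> i \<le> M) \<longrightarrow> wpf n \<omega> (d1*M) (\<lambda>x. p (restr U x))"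
    "\<forall>\<omega> U M. (\<forall>i\<in>U. i < n \<longrightarrow> \<omega> i \<le> M) \<longrightarrow> wpf n \<omega> (d2*M) (\<lambda>x. q (restr U x))" by blast
  show ?case
  proof (intro exI[of _ "d1 + d2"] allI impI)
    fix \<omega> :: "nat \<Rightarrow> nat" and U and M :: nat assume h: "\<forall>i\<in>U. i < n \<longrightarrow> \<omega> i \<le> M"
    have "wpf n \<omega> (d1 * M + d2 * M) (\<lambda>x. p (restr U x) * q (restr U x))"
      using d h by (intro wm) auto
    then show "wpf n \<omega> ((d1 + d2) * M) (\<lambda>x. p (restr U x) * q (restr U x))"
      by (simp add: add_mult_distrib)
  qed
qed

lemma upst_sub: "upst n f j \<subseteq> {..<n}"
proof
  fix i assume "i \<in> upst n f j"
  then have r: "(dep_edge n f)\<^sup>*\<^sup>* i j" "i \<noteq> j" by (auto simp: upst_def)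
  obtain y where "dep_edge n f i y" using r by (metis converse_rtranclpE)
  then show "i \<in> {..<n}" by (simp add: dep_edge_def)
qed

lemma upst_fin: "finite (upst n f j)"
  by (rule finite_subset[OF upst_sub]) simp

lemma upst_lt:
  assumes "i \<in> upst n f j"
  shows "card (upst n f i) < card (upst n f j)"
proof -
  have "upst n f i \<subseteq> upst n f j"
  proof
    fix k assume "k \<in> upst n f i"
    then have k: "(dep_edge n f)\<^sup>*\<^sup>* k i" "\<not> (dep_edge n f)\<^sup>*\<^sup>* i k" by (auto simp: upst_def)
    have ij: "(dep_edge n f)\<^sup>*\<^sup>* i j" "\<not> (dep_edge n f)\<^sup>*\<^sup>* j i" using assms by (auto simp: upst_def)
    have "(dep_edge n f)\<^sup>*\<^sup>* k j" using k(1) ij(1) by (rule rtranclp_trans)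
    moreover have "\<not> (dep_edge n f)\<^sup>*\<^sup>* j k"
    proof
      assume "(dep_edge n f)\<^sup>*\<^sup>* j k"
      then have "(dep_edge n f)\<^sup>*\<^sup>* j i" using k(1) by (rule rtranclp_trans)
      then show False using ij(2) by simp
    qed
    ultimately show "k \<in> upst n f j" by (simp add: upst_def)
  qed
  moreover have "i \<in> upst n f j - upst n f i" using assms by (auto simp: upst_def)
  ultimately have "upst n f i \<subset> upst n f j" by blast
  then show ?thesis by (rule psubset_card_mono[OF upst_fin])
qed

lemma upst_eq:
  assumes "dep_edge n f i j" "i \<notin> upst n f j"
  shows "upst n f i = upst n f j"
proof -
  have ij: "(dep_edge n f)\<^sup>*\<^sup>* i j" using assms(1) by auto
  then have ji: "(dep_edge n f)\<^sup>*\<^sup>* j i" using assms(2) by (auto simp: upst_def)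
  have "(dep_edge n f)\<^sup>*\<^sup>* k i \<longleftrightarrow> (dep_edge n f)\<^sup>*\<^sup>* k j" for k
    using ij ji rtranclp_trans[of "dep_edge n f" k i j] rtranclp_trans[of "dep_edge n f" k j i] by blast
  moreover have "(dep_edge n f)\<^sup>*\<^sup>* i k \<longleftrightarrow> (dep_edge n f)\<^sup>*\<^sup>* j k" for k
    using ij ji rtranclp_trans[of "dep_edge n f" i j k] rtranclp_trans[of "dep_edge n f" j i k] by blast
  ultimately show ?thesis unfolding upst_def by blast
qed

lemma f_wpf:
  assumes pvf: "poly_vector_field n f"
    and cyc: "\<forall>c. dep_cycle n f c \<longrightarrow> (\<exists>w. \<forall>x\<in>Rn n. cycle_weight f c x = w)"
  shows "\<exists>\<omega>. (\<forall>i. 1 \<le> \<omega> i) \<and> (\<forall>j<n. \<exists>g. wpf n \<omega> (\<omega> j) g \<and> (\<forall>x\<in>Rn n. f x j = g x))"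
proof -
  have "\<forall>j. \<exists>d. j < n \<longrightarrow> (\<forall>\<omega> U M. (\<forall>i\<in>U. i < n \<longrightarrow> \<omega> i \<le> M) \<longrightarrow> wpf n \<omega> (d*M) (\<lambda>x. f (restr U x) j))"
  proof
    fix j
    show "\<exists>d. j < n \<longrightarrow> (\<forall>\<omega> U M. (\<forall>i\<in>U. i < n \<longrightarrow> \<omega> i \<le> M) \<longrightarrow> wpf n \<omega> (d*M) (\<lambda>x. f (restr U x) j))"
    proof (cases "j < n")
      case True
      then have "poly_fun n (\<lambda>x. f x j)" using pvf by (simp add: poly_vector_field_def)
      from pf_wdeg[OF this] show ?thesis by blast
    qed simp
  qed
  then obtain D where D: "\<And>j \<omega> U M. j < n \<Longrightarrow> (\<forall>i\<in>U. i < n \<longrightarrow> \<omega> i \<le> M) \<Longrightarrow> wpf n \<omega> (D j * M) (\<lambda>x. f (restr U x) j)"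
    by metis
  define B where "B = 2 + (\<Sum>j<n. D j)"
  define \<omega> where "\<omega> i = B ^ card (upst n f i)" for i
  have B2: "2 \<le> B" by (simp add: B_def)
  have DB: "D j \<le> B" if "j < n" for j
  proof -
    have "D j \<le> (\<Sum>j<n. D j)" using that by (intro member_le_sum) auto
    then show ?thesis by (simp add: B_def)
  qed
  have z0: "(\<lambda>_. 0) \<in> Rn n" by (simp add: Rn_def)
  have "\<forall>j<n. \<exists>g. wpf n \<omega> (\<omega> j) g \<and> (\<forall>x\<in>Rn n. f x j = g x)"
  proof (intro allI impI)
    fix j assume j: "j < n"
    define U where "U = upst n f j"
    define c where "c = card U"
    define L where "L = {i. i < n \<and> i \<notin> U}"
    define a where "a i = gamma f i j (\<lambda>_. 0)" for i
    have "\<forall>i\<in>L. wpf n \<omega> (\<omega> j) (\<lambda>x. a i * x i)"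
    proof
      fix i assume i: "i \<in> L"
      show "wpf n \<omega> (\<omega> j) (\<lambda>x. a i * x i)"
      proof (cases "a i = 0")
        case True
        then have "(\<lambda>x. a i * x i) = (\<lambda>x. 0)" by simp
        then show ?thesis by (simp add: wc)
      next
        case False
        then have "dep_edge n f i j" using i j z0 by (auto simp: dep_edge_def a_def L_def)
        then have "upst n f i = upst n f j" using i upst_eq by (auto simp: L_def U_def)
        then have "\<omega> i = \<omega> j" by (simp add: \<omega>_def)
        then have "wpf n \<omega> (0 + \<omega> j) (\<lambda>x. a i * x i)"
          using i by (intro wm[OF wc wv]) (auto simp: L_def)
        then show ?thesis by simp
      qed
    qed
    then have w1: "wpf n \<omega> (\<omega> j) (\<lambda>x. \<Sum>i\<in>L. a i * x i)" by (intro wpf_sum) (auto simp: L_def)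
    define M where "M = (if c = 0 then 0 else B ^ (c - 1))"
    have "\<forall>i\<in>U. i < n \<longrightarrow> \<omega> i \<le> M"
    proof (intro ballI impI)
      fix i assume "i \<in> U"
      then have lt: "card (upst n f i) < c" using upst_lt by (simp add: U_def c_def)
      then have "B ^ card (upst n f i) \<le> B ^ (c - 1)" using B2 by (intro power_increasing) auto
      then show "\<omega> i \<le> M" using lt by (simp add: \<omega>_def M_def)
    qed
    from D[OF j this] have w2': "wpf n \<omega> (D j * M) (\<lambda>x. f (restr U x) j)" .
    have "D j * M \<le> \<omega> j"
    proof (cases "c = 0")
      case True then show ?thesis by (simp add: M_def)
    next
      case False
      have "D j * B ^ (c - 1) \<le> B * B ^ (c - 1)" using DB[OF j] by simp
      also have "\<dots> = B ^ c" using False by (cases c) auto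
      finally show ?thesis using False by (simp add: M_def \<omega>_def c_def U_def)
    qed
    with w2' have w2: "wpf n \<omega> (\<omega> j) (\<lambda>x. f (restr U x) j)" by (rule wmono)
    have "wpf n \<omega> (\<omega> j) (\<lambda>x. (\<Sum>i\<in>L. a i * x i) + f (restr U x) j)" using w1 w2 by (rule wa)
    moreover have "\<forall>x\<in>Rn n. f x j = (\<Sum>i\<in>L. a i * x i) + f (restr U x) j"
      using decomp[OF pvf cyc j] by (simp add: L_def U_def a_def)
    ultimately show "\<exists>g. wpf n \<omega> (\<omega> j) g \<and> (\<forall>x\<in>Rn n. f x j = g x)" by blast
  qed
  moreover have "\<forall>i. 1 \<le> \<omega> i" using B2 by (simp add: \<omega>_def)
  ultimately show ?thesis by blast
qed

definition lin :: "((nat \<Rightarrow> real) \<Rightarrow> real) set \<Rightarrow> ((nat \<Rightarrow> real) \<Rightarrow> real) \<Rightarrow> bool" where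
  "lin S q \<longleftrightarrow> (\<exists>c. \<forall>x. q x = (\<Sum>g\<in>S. c g * g x))"

lemma lin_elem: "finite S \<Longrightarrow> g \<in> S \<Longrightarrow> lin S g"
  unfolding lin_def
proof (intro exI[of _ "\<lambda>h. if h = g then 1 else 0"] allI)
  fix x assume "finite S" "g \<in> S"
  have "(\<Sum>h\<in>S. (if h = g then 1 else 0) * h x) = (\<Sum>h\<in>S. if h = g then g x else 0)"
    by (rule sum.cong) auto
  also have "\<dots> = g x" using \<open>finite S\<close> \<open>g \<in> S\<close> by simp
  finally show "g x = (\<Sum>h\<in>S. (if h = g then 1 else 0) * h x)" by simp
qed

lemma lin_zero: "lin S (\<lambda>x. 0)"
  unfolding lin_def by (intro exI[of _ "\<lambda>h. 0"]) simp

lemma lin_add: "lin S p \<Longrightarrow> lin S q \<Longrightarrow> lin S (\<lambda>x. p x + q x)"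
  unfolding lin_def
proof -
  assume "\<exists>c. \<forall>x. p x = (\<Sum>g\<in>S. c g * g x)" "\<exists>c. \<forall>x. q x = (\<Sum>g\<in>S. c g * g x)"
  then obtain c d where "\<forall>x. p x = (\<Sum>g\<in>S. c g * g x)" "\<forall>x. q x = (\<Sum>g\<in>S. d g * g x)" by blast
  then show "\<exists>e. \<forall>x. p x + q x = (\<Sum>g\<in>S. e g * g x)"
    by (intro exI[of _ "\<lambda>g. c g + d g"]) (simp add: distrib_right sum.distrib)
qed

lemma lin_scale: "lin S p \<Longrightarrow> lin S (\<lambda>x. a * p x)"
  unfolding lin_def
proof -
  assume "\<exists>c. \<forall>x. p x = (\<Sum>g\<in>S. c g * g x)"
  then obtain c where "\<forall>x. p x = (\<Sum>g\<in>S. c g * g x)" by blast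
  then show "\<exists>e. \<forall>x. a * p x = (\<Sum>g\<in>S. e g * g x)"
    by (intro exI[of _ "\<lambda>g. a * c g"]) (simp add: sum_distrib_left mult.assoc)
qed

lemma lin_mono: "lin S p \<Longrightarrow> S \<subseteq> T \<Longrightarrow> finite T \<Longrightarrow> lin T p"
  unfolding lin_def
proof -
  assume "\<exists>c. \<forall>x. p x = (\<Sum>g\<in>S. c g * g x)" "S \<subseteq> T" "finite T"
  then obtain c where c: "\<forall>x. p x = (\<Sum>g\<in>S. c g * g x)" by blast
  show "\<exists>e. \<forall>x. p x = (\<Sum>g\<in>T. e g * g x)"
  proof (intro exI[of _ "\<lambda>g. if g \<in> S then c g else 0"] allI)
    fix x
    have "(\<Sum>g\<in>T. (if g \<in> S then c g else 0) * g x) = (\<Sum>g\<in>S. (if g \<in> S then c g else 0) * g x)"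
      using \<open>S \<subseteq> T\<close> \<open>finite T\<close> by (intro sum.mono_neutral_right) auto
    also have "\<dots> = (\<Sum>g\<in>S. c g * g x)" by (rule sum.cong) auto
    finally show "p x = (\<Sum>g\<in>T. (if g \<in> S then c g else 0) * g x)" using c by simp
  qed
qed

lemma lin_sum: "finite I \<Longrightarrow> \<forall>i\<in>I. lin S (q i) \<Longrightarrow> lin S (\<lambda>x. \<Sum>i\<in>I. q i x)"
  by (induction I rule: finite_induct) (auto intro: lin_zero lin_add)

lemma lin_mult:
  assumes "lin S1 p" "lin S2 q" "\<forall>g\<in>S1. \<forall>h\<in>S2. lin T (\<lambda>x. g x * h x)" "finite S1" "finite S2"
  shows "lin T (\<lambda>x. p x * q x)"
proof -
  obtain c d where c: "\<forall>x. p x = (\<Sum>g\<in>S1. c g * g x)" and d: "\<forall>x. q x = (\<Sum>g\<in>S2. d g * g x)"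
    using assms(1,2) unfolding lin_def by blast
  have e: "(\<lambda>x. p x * q x) = (\<lambda>x. \<Sum>g\<in>S1. \<Sum>h\<in>S2. (c g * d h) * (g x * h x))"
    using c d by (auto simp: sum_product algebra_simps)
  show ?thesis unfolding e
    using assms(3-5) by (intro lin_sum ballI lin_scale) auto
qed

definition monom :: "nat \<Rightarrow> (nat \<Rightarrow> nat) \<Rightarrow> (nat \<Rightarrow> real) \<Rightarrow> real" where
  "monom n \<alpha> x = (\<Prod>i<n. x i ^ \<alpha> i)"

definition wdeg :: "nat \<Rightarrow> (nat \<Rightarrow> nat) \<Rightarrow> (nat \<Rightarrow> nat) \<Rightarrow> nat" where
  "wdeg n \<omega> \<alpha> = (\<Sum>i<n. \<omega> i * \<alpha> i)"

definition Al :: "nat \<Rightarrow> (nat \<Rightarrow> nat) \<Rightarrow> nat \<Rightarrow> (nat \<Rightarrow> nat) set" where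
  "Al n \<omega> d = {\<alpha>. (\<forall>k\<ge>n. \<alpha> k = 0) \<and> wdeg n \<omega> \<alpha> \<le> d}"

lemma Al_fin:
  assumes "\<forall>i. 1 \<le> \<omega> i"
  shows "finite (Al n \<omega> d)"
proof -
  have "Al n \<omega> d \<subseteq> (\<lambda>xs k. if k < n then xs ! k else 0) ` {xs. set xs \<subseteq> {..d} \<and> length xs = n}"
  proof
    fix \<alpha> assume a: "\<alpha> \<in> Al n \<omega> d"
    have "\<alpha> k \<le> d" if "k < n" for k
    proof -
      have "\<alpha> k \<le> \<omega> k * \<alpha> k" using assms by simp
      also have "\<dots> \<le> wdeg n \<omega> \<alpha>" unfolding wdeg_def using that
        by (intro member_le_sum[of k "{..<n}" "\<lambda>i. \<omega> i * \<alpha> i"]) auto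
      finally show ?thesis using a by (simp add: Al_def)
    qed
    then have "set (map \<alpha> [0..<n]) \<subseteq> {..d} \<and> length (map \<alpha> [0..<n]) = n" by auto
    moreover have "\<alpha> = (\<lambda>k. if k < n then map \<alpha> [0..<n] ! k else 0)"
      using a by (auto simp: Al_def)
    ultimately show "\<alpha> \<in> (\<lambda>xs k. if k < n then xs ! k else 0) ` {xs. set xs \<subseteq> {..d} \<and> length xs = n}"
      by blast
  qed
  moreover have "finite {xs. set xs \<subseteq> {..d::nat} \<and> length xs = n}"
    by (rule finite_lists_length_eq) simp
  ultimately show ?thesis by (rule finite_subset[OF _ finite_imageI])
qed

definition MonF where "MonF n \<omega> d = monom n ` Al n \<omega> d"

lemma MonF_fin: "\<forall>i. 1 \<le> \<omega> i \<Longrightarrow> finite (MonF n \<omega> d)"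
  unfolding MonF_def by (intro finite_imageI Al_fin)

lemma monom_unit: "i < n \<Longrightarrow> monom n (\<lambda>k. if k = i then 1 else 0) = (\<lambda>x. x i)"
proof
  fix x :: "nat \<Rightarrow> real" assume "i < n"
  have "(\<Prod>k<n. x k ^ (if k = i then 1 else 0)) = (\<Prod>k<n. if k = i then x k else 1)"
    by (rule prod.cong) auto
  also have "\<dots> = x i" using \<open>i < n\<close> by simp
  finally show "monom n (\<lambda>k. if k = i then 1 else 0) x = x i" by (simp add: monom_def)
qed

lemma wdeg_unit: "i < n \<Longrightarrow> wdeg n \<omega> (\<lambda>k. if k = i then 1 else 0) = \<omega> i"
proof -
  assume "i < n"
  have "(\<Sum>k<n. \<omega> k * (if k = i then 1 else 0)) = (\<Sum>k<n. if k = i then \<omega> k else 0)"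
    by (rule sum.cong) auto
  also have "\<dots> = \<omega> i" using \<open>i < n\<close> by simp
  finally show ?thesis by (simp add: wdeg_def)
qed

lemma unit_Al: "i < n \<Longrightarrow> \<omega> i \<le> d \<Longrightarrow> (\<lambda>k. if k = i then 1 else 0) \<in> Al n \<omega> d"
  by (auto simp: Al_def wdeg_unit)

lemma wdeg_add: "wdeg n \<omega> (\<lambda>k. \<alpha> k + \<beta> k) = wdeg n \<omega> \<alpha> + wdeg n \<omega> \<beta>"
  by (simp add: wdeg_def distrib_left sum.distrib)

lemma monom_add: "monom n (\<lambda>k. \<alpha> k + \<beta> k) x = monom n \<alpha> x * monom n \<beta> x"
  by (simp add: monom_def power_add prod.distrib)

lemma wpf_span:
  assumes "wpf n \<omega> d q" "\<forall>i. 1 \<le> \<omega> i"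
  shows "lin (MonF n \<omega> d) q"
  using assms(1)
proof induction
  case (wc d c)
  have "(\<lambda>_. 0) \<in> Al n \<omega> d" by (simp add: Al_def wdeg_def)
  then have "monom n (\<lambda>_. 0) \<in> MonF n \<omega> d" by (simp add: MonF_def)
  then have "lin (MonF n \<omega> d) (monom n (\<lambda>_. 0))"
    by (rule lin_elem[OF MonF_fin[OF assms(2)]])
  from lin_scale[OF this, of c] have "lin (MonF n \<omega> d) (\<lambda>x. c * monom n (\<lambda>_. 0) x)" .
  moreover have "(\<lambda>x. c * monom n (\<lambda>_. 0) x) = (\<lambda>x. c)" by (simp add: monom_def)
  ultimately show ?case by simp
next
  case (wv i d)
  have "(\<lambda>k. if k = i then 1 else 0) \<in> Al n \<omega> d" using wv by (rule unit_Al)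
  then have "monom n (\<lambda>k. if k = i then 1 else 0) \<in> MonF n \<omega> d" by (simp add: MonF_def)
  then have "lin (MonF n \<omega> d) (monom n (\<lambda>k. if k = i then 1 else 0))"
    by (rule lin_elem[OF MonF_fin[OF assms(2)]])
  then show ?case using monom_unit[OF wv(1)] by simp
next
  case (wa d p q)
  show ?case by (rule lin_add[OF wa.IH])
next
  case (wm d1 p d2 q)
  have "\<forall>g\<in>MonF n \<omega> d1. \<forall>h\<in>MonF n \<omega> d2. lin (MonF n \<omega> (d1 + d2)) (\<lambda>x. g x * h x)"
  proof (intro ballI)
    fix g h assume "g \<in> MonF n \<omega> d1" "h \<in> MonF n \<omega> d2"
    then obtain \<alpha> \<beta> where ab: "\<alpha> \<in> Al n \<omega> d1" "\<beta> \<in> Al n \<omega> d2" "g = monom n \<alpha>" "h = monom n \<beta>"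
      unfolding MonF_def by blast
    have "(\<lambda>k. \<alpha> k + \<beta> k) \<in> Al n \<omega> (d1 + d2)"
      using ab(1,2) unfolding Al_def mem_Collect_eq wdeg_add by simp
    then have "monom n (\<lambda>k. \<alpha> k + \<beta> k) \<in> MonF n \<omega> (d1 + d2)" by (simp add: MonF_def)
    then have "lin (MonF n \<omega> (d1 + d2)) (monom n (\<lambda>k. \<alpha> k + \<beta> k))"
      by (rule lin_elem[OF MonF_fin[OF assms(2)]])
    moreover have "monom n (\<lambda>k. \<alpha> k + \<beta> k) = (\<lambda>x. g x * h x)"
      unfolding ab(3,4) by (rule ext) (rule monom_add)
    ultimately show "lin (MonF n \<omega> (d1 + d2)) (\<lambda>x. g x * h x)" by simp
  qed
  then show ?case using wm.IH lin_mult[of "MonF n \<omega> d1" p "MonF n \<omega> d2" q] MonF_fin[OF assms(2)] by blast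
next
  case (wmono d p d')
  have "Al n \<omega> d \<subseteq> Al n \<omega> d'" using wmono(2) unfolding Al_def by auto
  then have "MonF n \<omega> d \<subseteq> MonF n \<omega> d'" unfolding MonF_def by (rule image_mono)
  then show ?case using wmono.IH lin_mono MonF_fin[OF assms(2)] by metis
qed

lemma abs_prod_le: "\<bar>x * y\<bar> \<le> x\<^sup>2 + (y::real)\<^sup>2"
proof -
  have "0 \<le> (\<bar>x\<bar> - \<bar>y\<bar>)\<^sup>2" by simp
  then have "2 * (\<bar>x\<bar> * \<bar>y\<bar>) \<le> \<bar>x\<bar>\<^sup>2 + \<bar>y\<bar>\<^sup>2" by (simp add: power2_eq_square algebra_simps)
  moreover have "0 \<le> \<bar>x\<bar> * \<bar>y\<bar>" by simp
  moreover have "\<bar>x * y\<bar> = \<bar>x\<bar> * \<bar>y\<bar>" by (rule abs_mult)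
  moreover have "\<bar>x\<bar>\<^sup>2 = x\<^sup>2" "\<bar>y\<bar>\<^sup>2 = y\<^sup>2" by simp_all
  ultimately show ?thesis by linarith
qed

lemma lin_ode_unique:
  fixes e :: "real \<Rightarrow> nat \<Rightarrow> real" and A :: "nat \<Rightarrow> nat \<Rightarrow> real"
  assumes ab: "a < 0" "0 < b"
    and de: "\<forall>t\<in>{a<..<b}. \<forall>k<N. ((\<lambda>s. e s k) has_real_derivative (\<Sum>l<N. A k l * e t l)) (at t)"
    and e0: "\<forall>k<N. e 0 k = 0"
  shows "\<forall>t\<in>{a<..<b}. \<forall>k<N. e t k = 0"
proof -
  define E where "E t = (\<Sum>k<N. (e t k)\<^sup>2)" for t
  define E' where "E' t = (\<Sum>k<N. 2 * e t k * (\<Sum>l<N. A k l * e t l))" for t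
  define K where "K = 4 * (\<Sum>k<N. \<Sum>l<N. \<bar>A k l\<bar>)"
  have E0: "E 0 = 0" using e0 by (simp add: E_def)
  have Enn: "0 \<le> E t" for t by (simp add: E_def sum_nonneg)
  have dE: "(E has_real_derivative E' t) (at t)" if "t \<in> {a<..<b}" for t
  proof -
    have "((\<lambda>s. (e s k)\<^sup>2) has_real_derivative 2 * e t k * (\<Sum>l<N. A k l * e t l)) (at t)" if "k < N" for k
      using de \<open>t \<in> _\<close> that by (auto intro!: derivative_eq_intros)
    then have "((\<lambda>s. \<Sum>k<N. (e s k)\<^sup>2) has_real_derivative (\<Sum>k<N. 2 * e t k * (\<Sum>l<N. A k l * e t l))) (at t)"
      by (intro DERIV_sum) auto
    then show ?thesis unfolding E_def E'_def by simp
  qed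
  have bnd: "\<bar>E' t\<bar> \<le> K * E t" for t
  proof -
    have sq: "(e t k)\<^sup>2 \<le> E t" if "k < N" for k
      unfolding E_def using that by (intro member_le_sum) auto
    have "\<bar>E' t\<bar> = \<bar>\<Sum>k<N. \<Sum>l<N. 2 * (A k l * (e t k * e t l))\<bar>"
      unfolding E'_def by (simp add: sum_distrib_left algebra_simps)
    also have "\<dots> \<le> (\<Sum>k<N. \<Sum>l<N. \<bar>2 * (A k l * (e t k * e t l))\<bar>)"
      by (rule order_trans[OF sum_abs]) (intro sum_mono sum_abs)
    also have "\<dots> \<le> (\<Sum>k<N. \<Sum>l<N. 2 * (\<bar>A k l\<bar> * (2 * E t)))"
    proof (intro sum_mono)
      fix k l assume "k \<in> {..<N}" "l \<in> {..<N}"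
      then have "(e t k)\<^sup>2 \<le> E t" "(e t l)\<^sup>2 \<le> E t" using sq by auto
      then have ee: "\<bar>e t k * e t l\<bar> \<le> 2 * E t" using abs_prod_le[of "e t k" "e t l"] by linarith
      then show "\<bar>2 * (A k l * (e t k * e t l))\<bar> \<le> 2 * (\<bar>A k l\<bar> * (2 * E t))"
        using mult_left_mono[OF ee, of "\<bar>A k l\<bar>"] by (simp add: abs_mult algebra_simps)
    qed
    also have "\<dots> = K * E t"
      by (simp add: K_def sum_distrib_left sum_distrib_right algebra_simps)
    finally show ?thesis .
  qed
  have Ez: "E t = 0" if t: "t \<in> {a<..<b}" for t
  proof (cases "0 \<le> t")
    case True
    define F where "F s = E s * exp (- (K * s))" for s
    have "F t \<le> F 0"
    proof (rule DERIV_nonpos_imp_nonincreasing[OF True])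
      fix x assume x: "0 \<le> x" "x \<le> t"
      then have xi: "x \<in> {a<..<b}" using t ab by auto
      have "(F has_real_derivative E' x * exp (- (K * x)) + E x * (exp (- (K * x)) * (- K))) (at x)"
        unfolding F_def using dE[OF xi] by (auto intro!: derivative_eq_intros)
      moreover have "E' x * exp (- (K * x)) + E x * (exp (- (K * x)) * (- K)) = exp (- (K * x)) * (E' x - K * E x)"
        by (simp add: algebra_simps)
      moreover have "E' x - K * E x \<le> 0" using bnd[of x] by linarith
      ultimately show "\<exists>y. (F has_real_derivative y) (at x) \<and> y \<le> 0"
        by (metis exp_gt_zero less_eq_real_def mult_pos_neg mult_zero_right)
    qed
    then have "E t * exp (- (K * t)) \<le> 0" using E0 by (simp add: F_def)
    then have "E t \<le> 0" by (simp add: mult_le_0_iff)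
    then show ?thesis using Enn[of t] by simp
  next
    case False
    define G where "G s = E s * exp (K * s)" for s
    have "G t \<le> G 0"
    proof (rule DERIV_nonneg_imp_nondecreasing[of t 0 G])
      show "t \<le> 0" using False by simp
      fix x assume x: "t \<le> x" "x \<le> 0"
      then have xi: "x \<in> {a<..<b}" using t ab by auto
      have "(G has_real_derivative E' x * exp (K * x) + E x * (exp (K * x) * K)) (at x)"
        unfolding G_def using dE[OF xi] by (auto intro!: derivative_eq_intros)
      moreover have "E' x * exp (K * x) + E x * (exp (K * x) * K) = exp (K * x) * (E' x + K * E x)"
        by (simp add: algebra_simps)
      moreover have "0 \<le> E' x + K * E x" using bnd[of x] by linarith
      ultimately show "\<exists>y. (G has_real_derivative y) (at x) \<and> 0 \<le> y"
        by (metis exp_ge_zero mult_nonneg_nonneg)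
    qed
    then have "E t * exp (K * t) \<le> 0" using E0 by (simp add: G_def)
    then have "E t \<le> 0" by (simp add: mult_le_0_iff)
    then show ?thesis using Enn[of t] by simp
  qed
  show ?thesis
  proof (intro ballI allI impI)
    fix t k assume "t \<in> {a<..<b}" "k < N"
    then have "(\<Sum>k<N. (e t k)\<^sup>2) = 0" using Ez by (simp add: E_def)
    then have "\<forall>k\<in>{..<N}. (e t k)\<^sup>2 = 0" by (subst (asm) sum_nonneg_eq_0_iff) auto
    then show "e t k = 0" using \<open>k < N\<close> by simp
  qed
qed

lemma wpf_lie:
  assumes "wpf n \<omega> d q" "\<forall>j<n. wpf n \<omega> (\<omega> j) (g j)"
  shows "\<exists>q'. wpf n \<omega> d q' \<and> (\<forall>x t. (\<forall>i<n. ((\<lambda>s. x s i) has_real_derivative g i (x t)) (at t)) \<longrightarrow>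
            ((\<lambda>s. q (x s)) has_real_derivative q' (x t)) (at t))"
  using assms(1)
proof induction
  case (wc d c)
  show ?case by (intro exI[of _ "\<lambda>x. 0"] conjI wpf.wc) auto
next
  case (wv i d)
  have "wpf n \<omega> d (g i)" using assms(2) wv by (blast intro: wmono)
  then show ?case using wv(1) by (intro exI[of _ "g i"]) auto
next
  case (wa d p q)
  then obtain p' q' where p': "wpf n \<omega> d p'" "\<forall>x t. (\<forall>i<n. ((\<lambda>s. x s i) has_real_derivative g i (x t)) (at t)) \<longrightarrow>
            ((\<lambda>s. p (x s)) has_real_derivative p' (x t)) (at t)"
    and q': "wpf n \<omega> d q'" "\<forall>x t. (\<forall>i<n. ((\<lambda>s. x s i) has_real_derivative g i (x t)) (at t)) \<longrightarrow>
            ((\<lambda>s. q (x s)) has_real_derivative q' (x t)) (at t)" by blast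
  show ?case
  proof (intro exI[of _ "\<lambda>x. p' x + q' x"] conjI allI impI)
    show "wpf n \<omega> d (\<lambda>x. p' x + q' x)" using p'(1) q'(1) by (rule wpf.wa)
    fix x t assume h: "\<forall>i<n. ((\<lambda>s. x s i) has_real_derivative g i (x t)) (at t)"
    show "((\<lambda>s. p (x s) + q (x s)) has_real_derivative p' (x t) + q' (x t)) (at t)"
      using p'(2) q'(2) h by (intro DERIV_add) auto
  qed
next
  case (wm d1 p d2 q)
  then obtain p' q' where p': "wpf n \<omega> d1 p'" "\<forall>x t. (\<forall>i<n. ((\<lambda>s. x s i) has_real_derivative g i (x t)) (at t)) \<longrightarrow>
            ((\<lambda>s. p (x s)) has_real_derivative p' (x t)) (at t)"
    and q': "wpf n \<omega> d2 q'" "\<forall>x t. (\<forall>i<n. ((\<lambda>s. x s i) has_real_derivative g i (x t)) (at t)) \<longrightarrow>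
            ((\<lambda>s. q (x s)) has_real_derivative q' (x t)) (at t)" by blast
  show ?case
  proof (intro exI[of _ "\<lambda>x. p' x * q x + p x * q' x"] conjI allI impI)
    show "wpf n \<omega> (d1 + d2) (\<lambda>x. p' x * q x + p x * q' x)"
      using p'(1) q'(1) wm.hyps by (intro wpf.wa wpf.wm)
    fix x t assume h: "\<forall>i<n. ((\<lambda>s. x s i) has_real_derivative g i (x t)) (at t)"
    have "((\<lambda>s. p (x s) * q (x s)) has_real_derivative p' (x t) * q (x t) + q' (x t) * p (x t)) (at t)"
      using p'(2) q'(2) h by (intro DERIV_mult) auto
    then show "((\<lambda>s. p (x s) * q (x s)) has_real_derivative p' (x t) * q (x t) + p (x t) * q' (x t)) (at t)"
      by (simp add: algebra_simps)
  qed
next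
  case (wmono d p d')
  then show ?case by (blast intro: wpf.wmono)
qed

lemma wpf_pow: "i < n \<Longrightarrow> wpf n \<omega> (\<omega> i * k) (\<lambda>x. x i ^ k)"
proof (induction k)
  case 0 then show ?case using wpf.wc[of n \<omega> 0 1] by simp
next
  case (Suc k)
  have "wpf n \<omega> (\<omega> i + \<omega> i * k) (\<lambda>x. x i * x i ^ k)"
    using Suc by (intro wpf.wm wpf.wv) auto
  then show ?case by simp
qed

lemma wpf_prod:
  assumes "finite I" "\<forall>i\<in>I. wpf n \<omega> (dd i) (q i)"
  shows "wpf n \<omega> (\<Sum>i\<in>I. dd i) (\<lambda>x. \<Prod>i\<in>I. q i x)"
  using assms
proof (induction I rule: finite_induct)
  case empty then show ?case using wpf.wc[of n \<omega> 0 1] by simp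
next
  case (insert i I)
  then have "wpf n \<omega> (dd i + (\<Sum>i\<in>I. dd i)) (\<lambda>x. q i x * (\<Prod>i\<in>I. q i x))"
    by (intro wpf.wm) auto
  then show ?case using insert by simp
qed

lemma wpf_monom:
  assumes "\<alpha> \<in> Al n \<omega> d"
  shows "wpf n \<omega> d (monom n \<alpha>)"
proof -
  have "wpf n \<omega> (\<Sum>i<n. \<omega> i * \<alpha> i) (\<lambda>x. \<Prod>i<n. x i ^ \<alpha> i)"
    by (rule wpf_prod) (auto intro: wpf_pow)
  then have "wpf n \<omega> (wdeg n \<omega> \<alpha>) (monom n \<alpha>)"
    by (simp add: wdeg_def monom_def[abs_def])
  then show ?thesis using assms by (auto simp: Al_def intro: wpf.wmono)
qed

lemma lin_list:
  assumes "lin (set ms) q" "distinct ms"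
  shows "\<exists>c. \<forall>x. q x = (\<Sum>l<length ms. c l * (ms!l) x)"
proof -
  obtain c where c: "\<forall>x. q x = (\<Sum>h\<in>set ms. c h * h x)" using assms(1) by (auto simp: lin_def)
  have bij: "bij_betw ((!) ms) {..<length ms} (set ms)" by (rule bij_betw_nth[OF assms(2)]) auto
  have "(\<Sum>h\<in>set ms. c h * h x) = (\<Sum>l<length ms. c (ms!l) * (ms!l) x)" for x
    using sum.reindex_bij_betw[OF bij, of "\<lambda>h. c h * h x"] by simp
  then show ?thesis using c by (intro exI[of _ "\<lambda>l. c (ms!l)"]) auto
qed

lemma sum_shift_split:
  fixes r :: nat
  shows "(\<Sum>l<n+r. (if l < n then 0 else F (l - n)) :: real) = (\<Sum>l<r. F l)"
  by (induction r) auto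

theorem theorem1:
  fixes n :: nat and f :: "(nat \<Rightarrow> real) \<Rightarrow> (nat \<Rightarrow> real)"
  assumes "poly_vector_field n f"
    and "\<forall>c. dep_cycle n f c \<longrightarrow> (\<exists>w. \<forall>x\<in>Rn n. cycle_weight f c x = w)"
  shows "super_linearizable n f"
proof -
  obtain \<omega> where om1: "\<forall>i. 1 \<le> \<omega> i"
    and omg: "\<forall>j<n. \<exists>g. wpf n \<omega> (\<omega> j) g \<and> (\<forall>x\<in>Rn n. f x j = g x)"
    using f_wpf[OF assms] by blast
  have "\<forall>j. \<exists>g. j < n \<longrightarrow> wpf n \<omega> (\<omega> j) g \<and> (\<forall>x\<in>Rn n. f x j = g x)" using omg by blast
  from choice[OF this] obtain g where g0: "\<forall>j. j < n \<longrightarrow> wpf n \<omega> (\<omega> j) (g j) \<and> (\<forall>x\<in>Rn n. f x j = g j x)"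
    by blast
  have g: "wpf n \<omega> (\<omega> j) (g j) \<and> (\<forall>x\<in>Rn n. f x j = g j x)" if "j < n" for j using g0 that by blast
  define W where "W = (\<Sum>j<n. \<omega> j)"
  have omW: "\<omega> j \<le> W" if "j < n" for j
    unfolding W_def using that by (intro member_le_sum) auto
  have gW: "wpf n \<omega> W (g j)" if "j < n" for j by (rule wmono[OF conjunct1[OF g[OF that]] omW[OF that]])
  have gall: "\<forall>j<n. wpf n \<omega> (\<omega> j) (g j)" using g by blast
  obtain ms where ms: "set ms = MonF n \<omega> W" "distinct ms"
    using finite_distinct_list[OF MonF_fin[OF om1]] by blast
  define N where "N = length ms"
  have coords: "\<exists>k<N. ms ! k = (\<lambda>x. x i)" if "i < n" for i
  proof -
    have "monom n (\<lambda>k. if k = i then 1 else 0) \<in> MonF n \<omega> W"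
      unfolding MonF_def using unit_Al[of i n \<omega> W] that omW[OF that] by blast
    then have "(\<lambda>x. x i) \<in> set ms" using ms monom_unit[OF that] by simp
    then show ?thesis by (simp add: in_set_conv_nth N_def)
  qed
  define Dcond where "Dcond x t \<longleftrightarrow> (\<forall>i<n. ((\<lambda>s. x s i) has_real_derivative g i (x t)) (at t))"
    for x :: "real \<Rightarrow> nat \<Rightarrow> real" and t
  have "\<forall>k. \<exists>c. (k < n \<longrightarrow> (\<forall>x\<in>Rn n. f x k = (\<Sum>l<N. c l * (ms!l) x))) \<and>
      (n \<le> k \<and> k < n + N \<longrightarrow> (\<forall>x t. Dcond x t \<longrightarrow>
         ((\<lambda>s. (ms!(k-n)) (x s)) has_real_derivative (\<Sum>l<N. c l * (ms!l) (x t))) (at t)))"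
  (is "\<forall>k. \<exists>c. ?P k c")
  proof
    fix k
    show "\<exists>c. (k < n \<longrightarrow> (\<forall>x\<in>Rn n. f x k = (\<Sum>l<N. c l * (ms!l) x))) \<and>
      (n \<le> k \<and> k < n + N \<longrightarrow> (\<forall>x t. Dcond x t \<longrightarrow>
         ((\<lambda>s. (ms!(k-n)) (x s)) has_real_derivative (\<Sum>l<N. c l * (ms!l) (x t))) (at t)))"
    proof (cases "k < n")
      case True
      have "lin (set ms) (g k)" using wpf_span[OF gW[OF True] om1] ms by simp
      then obtain c where c: "\<forall>x. g k x = (\<Sum>l<N. c l * (ms!l) x)"
        using lin_list[OF _ ms(2)] N_def by blast
      show ?thesis using True c g[OF True] by (intro exI[of _ c]) auto
    next
      case False
      show ?thesis
      proof (cases "k < n + N")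
        case True
        then have "k - n < length ms" using False N_def by simp
        then have "ms ! (k - n) \<in> MonF n \<omega> W" using ms(1) nth_mem by blast
        then obtain \<alpha> where "\<alpha> \<in> Al n \<omega> W" "ms ! (k - n) = monom n \<alpha>" by (auto simp: MonF_def)
        then have "wpf n \<omega> W (ms ! (k - n))" using wpf_monom by simp
        from wpf_lie[OF this gall] obtain q' where q': "wpf n \<omega> W q'"
          "\<forall>x t. Dcond x t \<longrightarrow> ((\<lambda>s. (ms ! (k - n)) (x s)) has_real_derivative q' (x t)) (at t)"
          unfolding Dcond_def by blast
        have "lin (set ms) q'" using wpf_span[OF q'(1) om1] ms by simp
        then obtain c where c: "\<forall>x. q' x = (\<Sum>l<N. c l * (ms!l) x)"
          using lin_list[OF _ ms(2)] N_def by blast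
        show ?thesis using False q'(2) c by (intro exI[of _ c]) auto
      qed (use False in auto)
    qed
  qed
  from choice[OF this] obtain Cf where Cf0: "\<forall>k. ?P k (Cf k)" by blast
  have Cf1: "\<forall>x\<in>Rn n. f x k = (\<Sum>l<N. Cf k l * (ms!l) x)" if "k < n" for k
    using Cf0 that by blast
  have Cf2: "((\<lambda>s. (ms!(k-n)) (x s)) has_real_derivative (\<Sum>l<N. Cf k l * (ms!l) (x t))) (at t)"
    if "n \<le> k" "k < n + N" "Dcond x t" for k x t
    using Cf0 that by blast
  define A where "A k l = (if l < n then 0 else Cf k (l - n))" for k l
  define p where "p x k = (ms ! k) x" for x :: "nat \<Rightarrow> real" and k
  have Asum: "(\<Sum>l<n+N. A k l * y l) = (\<Sum>l<N. Cf k l * y (n + l))" for k y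
  proof -
    have "(\<Sum>l<n+N. A k l * y l) = (\<Sum>l<n+N. (if l < n then 0 else Cf k (l - n) * y (n + (l - n))))"
      by (rule sum.cong) (auto simp: A_def)
    also have "\<dots> = (\<Sum>l<N. Cf k l * y (n + l))" by (rule sum_shift_split)
    finally show ?thesis .
  qed
  show ?thesis
    unfolding super_linearizable_def
  proof (intro exI[of _ N] exI[of _ A] exI[of _ "\<lambda>_. 0"] exI[of _ p] conjI)
    show "\<forall>x\<in>Rn n. \<forall>y\<in>Rn n. (\<forall>k<N. p x k = p y k) \<longrightarrow> x = y"
    proof (intro ballI impI)
      fix x y assume x: "x \<in> Rn n" and y: "y \<in> Rn n" and h: "\<forall>k<N. p x k = p y k"
      show "x = y"
      proof
        fix i
        show "x i = y i"
        proof (cases "i < n")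
          case True
          then obtain k where "k < N" "ms ! k = (\<lambda>x. x i)" using coords by blast
          then show ?thesis using h by (auto simp: p_def)
        next
          case False
          then show ?thesis using x y by (simp add: Rn_def)
        qed
      qed
    qed
    show "\<forall>x0\<in>Rn n. \<forall>z. (\<forall>k<n. z 0 k = x0 k) \<and> (\<forall>k<N. z 0 (n + k) = p x0 k) \<and>
          (\<forall>t. \<forall>k<n + N. ((\<lambda>s. z s k) has_real_derivative (\<Sum>l<n + N. A k l * z t l) + 0) (at t)) \<longrightarrow>
          (\<forall>a b x. a < 0 \<and> 0 < b \<and> is_solution n f {a<..<b} x0 x \<longrightarrow> (\<forall>t\<in>{a<..<b}. \<forall>i<n. z t i = x t i))"
    proof (intro ballI allI impI)
      fix x0 z a b x t i
      assume x0: "x0 \<in> Rn n"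
        and hz: "(\<forall>k<n. z 0 k = x0 k) \<and> (\<forall>k<N. z 0 (n + k) = p x0 k) \<and>
          (\<forall>t. \<forall>k<n + N. ((\<lambda>s. z s k) has_real_derivative (\<Sum>l<n + N. A k l * z t l) + 0) (at t))"
        and hx: "a < 0 \<and> 0 < b \<and> is_solution n f {a<..<b} x0 x"
        and t: "t \<in> {a<..<b}" and i: "i < n"
      have ab: "a < 0" "0 < b" using hx by auto
      have sol: "\<forall>t\<in>{a<..<b}. x t \<in> Rn n" "\<forall>i<n. x 0 i = x0 i"
        "\<forall>t\<in>{a<..<b}. \<forall>i<n. ((\<lambda>s. x s i) has_real_derivative f (x t) i) (at t)"
        using hx by (auto simp: is_solution_def)
      have x0eq: "x 0 = x0"
      proof
        fix k
        have "x 0 \<in> Rn n" using sol(1) ab by auto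
        then show "x 0 k = x0 k" using sol(2) x0 by (cases "k < n") (auto simp: Rn_def)
      qed
      define \<psi> where "\<psi> s k = (if k < n then x s k else (ms!(k-n)) (x s))" for s k
      define e where "e s k = z s k - \<psi> s k" for s k
      have \<psi>n: "\<psi> s (n + l) = (ms!l) (x s)" for s l by (simp add: \<psi>_def)
      have dpsi: "((\<lambda>s. \<psi> s k) has_real_derivative (\<Sum>l<n+N. A k l * \<psi> t' l)) (at t')"
        if t': "t' \<in> {a<..<b}" and k: "k < n + N" for t' k
      proof -
        have xt: "x t' \<in> Rn n" using sol(1) t' by blast
        have Dc: "Dcond x t'"
          unfolding Dcond_def
        proof (intro allI impI)
          fix j assume j: "j < n"
          have "f (x t') j = g j (x t')" using g[OF j] xt by blast
          then show "((\<lambda>s. x s j) has_real_derivative g j (x t')) (at t')" using sol(3) t' j by metis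
        qed
        have "((\<lambda>s. \<psi> s k) has_real_derivative (\<Sum>l<N. Cf k l * (ms!l) (x t'))) (at t')"
        proof (cases "k < n")
          case True
          then have "(\<lambda>s. \<psi> s k) = (\<lambda>s. x s k)" by (simp add: \<psi>_def)
          moreover have "f (x t') k = (\<Sum>l<N. Cf k l * (ms!l) (x t'))" using Cf1[OF True] xt by blast
          ultimately show ?thesis using sol(3) t' True by metis
        next
          case False
          then have "(\<lambda>s. \<psi> s k) = (\<lambda>s. (ms!(k-n)) (x s))" by (simp add: \<psi>_def)
          then show ?thesis using Cf2[of k x t'] False k Dc by simp
        qed
        then show ?thesis unfolding Asum \<psi>n .
      qed
      have de: "\<forall>t\<in>{a<..<b}. \<forall>k<n+N. ((\<lambda>s. e s k) has_real_derivative (\<Sum>l<n+N. A k l * e t l)) (at t)"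
      proof (intro ballI allI impI)
        fix t' k assume t': "t' \<in> {a<..<b}" and k: "k < n + N"
        have "((\<lambda>s. z s k - \<psi> s k) has_real_derivative
               ((\<Sum>l<n + N. A k l * z t' l) + 0) - (\<Sum>l<n+N. A k l * \<psi> t' l)) (at t')"
          using hz k dpsi[OF t' k] by (intro DERIV_diff) auto
        moreover have "((\<Sum>l<n + N. A k l * z t' l) + 0) - (\<Sum>l<n+N. A k l * \<psi> t' l) = (\<Sum>l<n+N. A k l * e t' l)"
          by (simp add: e_def sum_subtractf right_diff_distrib)
        ultimately show "((\<lambda>s. e s k) has_real_derivative (\<Sum>l<n+N. A k l * e t' l)) (at t')"
          by (simp add: e_def)
      qed
      have e0: "\<forall>k<n+N. e 0 k = 0"
      proof (intro allI impI)
        fix k assume k: "k < n + N"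
        show "e 0 k = 0"
        proof (cases "k < n")
          case True
          then show ?thesis using hz x0eq by (simp add: e_def \<psi>_def)
        next
          case False
          then have "k - n < N" using k by simp
          then have "z 0 (n + (k - n)) = p x0 (k - n)" using hz by blast
          then show ?thesis using False x0eq by (simp add: e_def \<psi>_def p_def)
        qed
      qed
      have "e t i = 0" using lin_ode_unique[OF ab de e0] t i by simp
      then show "z t i = x t i" using i by (simp add: e_def \<psi>_def)
    qed
  qed
qed

end
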